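(* Let $\mathbb{X}=\{1,2,3,\dots\}$, $\alpha>0$, and let $\mu\in\mathcal{P}(\mathbb{X})$ satisfy, for some constants $0<k_0\le k_1$ and some $N>0$, $k_0e^{-\alpha x}\le\mu(\{x\})\le k_1e^{-\alpha x}$ for all $x\ge N$. Let $\epsilon_n=n^{-\tau}$ with $\tau\in(0,1/2)$. Then $$|H(\mu)-H(\hat\mu_{n,\epsilon_n})|=O(n^{-\tau}\log n),\qquad\mathbb{P}_\mu\text{-a.s.}$$
   Context: For a probability $\mu$ on $\mathbb{X}$, $f_\mu(x)=\mu(\{x\})$, $A_\mu=\{x:f_\mu(x)>0\}$, and $H(\mu)=-\sum_{x\in A_\mu}f_\mu(x)\log f_\mu(x)$ ($\log$ to a fixed base $b>1$). Given i.i.d. $X_1,X_2,\dots\sim\mu$ with law $\mathbb{P}_\mu$, $\hat\mu_n(A)=\frac1n\sum_{k=1}^n\mathbb{1}_A(X_k)$ is the empirical measure. For $\epsilon>0$, $\Gamma_\epsilon=\{x\in\mathbb{X}:\hat\mu_n(\{x\})\ge\epsilon\}$ and $\hat\mu_{n,\epsilon}=\hat\mu_n(\cdot\mid\Gamma_\epsilon)$, i.e. $\hat\mu_{n,\epsilon}(A)=\hat\mu_n(A\cap\Gamma_\epsilon)/\hat\mu_n(\Gamma_\epsilon)$ (defined arbitrarily when $\Gamma_\epsilon=\emptyset$). *)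

theory Defs
  imports "HOL-Probability.Probability" "HOL-Library.Landau_Symbols"
begin

definition entropy_pmf :: "real \<Rightarrow> ('b \<Rightarrow> real) \<Rightarrow> real" where
  "entropy_pmf b f = - infsum (\<lambda>x. f x * log b (f x)) {x. f x > 0}"

definition emp_mass :: "(nat \<Rightarrow> 'a \<Rightarrow> 'b) \<Rightarrow> nat \<Rightarrow> 'a \<Rightarrow> 'b \<Rightarrow> real" where
  "emp_mass X n \<omega> x = real (card {k. k < n \<and> X k \<omega> = x}) / real n"

definition Gamma_set :: "(nat \<Rightarrow> 'a \<Rightarrow> 'b) \<Rightarrow> nat \<Rightarrow> real \<Rightarrow> 'a \<Rightarrow> 'b set" where
  "Gamma_set X n \<epsilon> \<omega> = {x. emp_mass X n \<omega> x \<ge> \<epsilon>}"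

text \<open>Mass function of the empirical measure conditioned on Gamma_eps
  (chosen to be the zero function when Gamma_eps is empty).\<close>
definition cond_emp_mass :: "(nat \<Rightarrow> 'a \<Rightarrow> 'b) \<Rightarrow> nat \<Rightarrow> real \<Rightarrow> 'a \<Rightarrow> 'b \<Rightarrow> real" where
  "cond_emp_mass X n \<epsilon> \<omega> x =
     (if x \<in> Gamma_set X n \<epsilon> \<omega>
      then emp_mass X n \<omega> x / (\<Sum>y\<in>Gamma_set X n \<epsilon> \<omega>. emp_mass X n \<omega> y)
      else 0)"

end

theory Submission imports Defs begin

lemma xlnx_diff_aux:
  fixes u v d :: real
  assumes "d > 0" "d \<le> v" "v \<le> u" "u \<le> 1"
  shows "\<bar>u * ln u - v * ln v\<bar> \<le> (u-v) * (ln(1/d)+1)"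
proof -
  have v0: "v > 0" using assms by linarith
  have l1: "ln u - ln v \<le> u/v - 1" using ln_le_minus_one[of "u/v"] v0 assms ln_div[of u v] by simp
  have "v * (ln u - ln v) \<le> v * (u/v - 1)" using l1 v0 by (intro mult_left_mono) auto
  also have "\<dots> = u - v" using v0 by (simp add: field_simps)
  finally have a1: "v * (ln u - ln v) \<le> u - v" .
  have a2: "ln u - ln v \<ge> 0" using assms v0 by simp
  have a3: "v * (ln u - ln v) \<ge> 0" using a2 v0 by simp
  have lu: "ln u \<le> 0" using assms v0 by simp
  have ld: "ln d \<le> ln u" using assms by simp
  have ldd: "ln (1/d) = - ln d" using assms by (simp add: ln_div)
  have b1: "(u-v) * ln u \<le> 0" using lu assms by (simp add: mult_nonneg_nonpos)
  have b2: "(u-v) * ln d \<le> (u-v) * ln u" using ld assms by (intro mult_left_mono) auto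
  have eq: "u * ln u - v * ln v = (u-v) * ln u + v * (ln u - ln v)" by (simp add: algebra_simps)
  have "ln (1/d) \<ge> 0" using ldd ld lu by linarith
  then have "(u-v) * (ln(1/d)+1) = - ((u-v) * ln d) + (u - v)" using ldd by (simp add: algebra_simps)
  then show ?thesis using eq a1 a3 b1 b2 by (simp add: abs_le_iff) 
qed

lemma xlnx_diff:
  fixes u v d :: real
  assumes "d > 0" "d \<le> v" "v \<le> 1" "d \<le> u" "u \<le> 1"
  shows "\<bar>u * ln u - v * ln v\<bar> \<le> \<bar>u-v\<bar>*(ln(1/d)+1)"
proof (cases "v \<le> u")
  case True then show ?thesis using xlnx_diff_aux[of d v u] assms by simp
next
  case False then show ?thesis using xlnx_diff_aux[of d u v] assms by (simp add: abs_minus_commute)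
qed

lemma has_sum_shift_nonneg:
  fixes g :: "nat \<Rightarrow> real"
  assumes "(\<lambda>j. g (m + j)) sums V" "\<And>x. x \<ge> m \<Longrightarrow> g x \<ge> 0"
  shows "(g has_sum V) {m..}"
proof -
  have "((\<lambda>j. g (m+j)) has_sum V) UNIV" by (rule sums_nonneg_imp_has_sum) (use assms in auto)
  moreover have "{m..} = (+) m ` UNIV"
    by (auto simp: image_iff) (metis le_add_diff_inverse)
  moreover have "inj ((+) m)" by (auto simp: inj_def)
  ultimately show ?thesis using has_sum_reindex[of "(+) m" UNIV g V] by (simp add: comp_def)
qed

lemma summable_n_pow:
  fixes r :: real assumes "0 \<le> r" "r < 1"
  shows "summable (\<lambda>j. real j * r^j)"
proof (rule summable_ratio_test[where c = "(1+r)/2" and N = "nat \<lceil>2 * r/(1-r)\<rceil>"])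
  show "(1+r)/2 < 1" using assms by simp
  fix n assume n: "nat \<lceil>2 * r/(1-r)\<rceil> \<le> n"
  have "2 * r/(1-r) \<le> real n" using n by linarith
  then have "2 * r \<le> real n * (1-r)" using assms by (simp add: field_simps)
  then have "(real n + 1) * r \<le> (1+r)/2 * real n" by (simp add: algebra_simps)
  then have "(real n + 1) * r * r^n \<le> (1+r)/2 * real n * r^n" using assms by (intro mult_right_mono) auto
  then show "norm (real (Suc n) * r ^ Suc n) \<le> (1+r)/2 * norm (real n * r^n)"
    using assms by (simp add: algebra_simps)
qed

lemma tail_sums:
  fixes r :: real assumes "0 \<le> r" "r < 1"
  shows "(\<lambda>j. r^(m+j)) sums (r^m / (1-r))"
    and "(\<lambda>j. real (m+j) * r^(m+j)) sums (r^m * (real m/(1-r) + (\<Sum>j. real j * r^j)))"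
proof -
  have g: "(\<lambda>j. r^j) sums (1/(1-r))" using geometric_sums[of r] assms by simp
  show "(\<lambda>j. r^(m+j)) sums (r^m / (1-r))" using sums_mult[OF g, of "r^m"] by (simp add: power_add)
  have s2: "(\<lambda>j. real j * r^j) sums (\<Sum>j. real j * r^j)" using summable_n_pow[OF assms] by (simp add: summable_sums)
  have "(\<lambda>j. r^m * (real m * r^j + real j * r^j)) sums (r^m * (real m * (1/(1-r)) + (\<Sum>j. real j * r^j)))"
    by (intro sums_mult sums_add s2 sums_mult[OF g])
  then show "(\<lambda>j. real (m+j) * r^(m+j)) sums (r^m * (real m/(1-r) + (\<Sum>j. real j * r^j)))"
    by (simp add: power_add algebra_simps)
qed


lemma ln_close_1:
  fixes S :: real assumes "S \<ge> 1/2"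
  shows "\<bar>ln S\<bar> \<le> 2 * \<bar>S - 1\<bar>" and "\<bar>1 - 1/S\<bar> \<le> 2 * \<bar>S - 1\<bar>"
proof -
  have S0: "S > 0" using assms by simp
  have u: "ln S \<le> S - 1" using ln_le_minus_one S0 by blast
  have "ln (1/S) \<le> 1/S - 1" using ln_le_minus_one[of "1/S"] S0 by simp
  then have l: "ln S \<ge> 1 - 1/S" using S0 by (simp add: ln_div)
  have e: "1 - 1/S = (S - 1)/S" using S0 by (simp add: field_simps)
  have "\<bar>(S - 1)/S\<bar> = \<bar>S - 1\<bar> / S" using S0 by simp
  also have "\<dots> \<le> \<bar>S - 1\<bar> / (1/2)" using assms by (intro divide_left_mono) auto
  finally have f: "\<bar>1 - 1/S\<bar> \<le> 2 * \<bar>S - 1\<bar>" using e by simp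
  then show "\<bar>1 - 1/S\<bar> \<le> 2 * \<bar>S - 1\<bar>" .
  show "\<bar>ln S\<bar> \<le> 2 * \<bar>S - 1\<bar>" using u l f by (smt (verit))
qed

lemma det_bound:
  fixes p q :: "nat \<Rightarrow> real" and \<epsilon> t P0 R0 :: real and m :: nat and D :: "nat set"
  assumes p0: "\<And>x. 0 \<le> p x" and p1: "\<And>x. p x \<le> 1"
    and psum: "(p has_sum 1) UNIV"
    and hsum: "(\<lambda>x. p x * ln (p x)) summable_on UNIV"
    and q0: "\<And>x. 0 \<le> q x" and qF: "\<And>F. finite F \<Longrightarrow> sum q F \<le> 1"
    and eps: "\<epsilon> > 0" and t0: "0 \<le> t"
    and d1: "\<And>x. x < m \<Longrightarrow> \<bar>q x - p x\<bar> \<le> t"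
    and d2: "t \<le> \<epsilon>/4" "real m * t \<le> \<epsilon>/4"
    and d3: "infsum p {m..} \<le> \<epsilon>/2"
    and d4: "\<And>x. p x > 0 \<Longrightarrow> m \<le> x \<or> p x < 2*\<epsilon> \<Longrightarrow> x \<in> D"
    and d5: "infsum p D \<le> P0" "infsum (\<lambda>x. \<bar>p x * ln (p x)\<bar>) D \<le> R0"
    and d6: "real m * t + P0 \<le> 1/2"
  shows "finite {x. \<epsilon> \<le> q x}" "sum q {x. \<epsilon> \<le> q x} > 0"
    "\<bar>infsum (\<lambda>x. p x * ln (p x)) {x. p x > 0}
       - (\<Sum>x\<in>{x. \<epsilon> \<le> q x}. (q x / sum q {x. \<epsilon> \<le> q x}) * ln (q x / sum q {x. \<epsilon> \<le> q x}))\<bar>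
     \<le> real m * t * (ln (2/\<epsilon>) + 1)
       + 2 * (real m * t + P0) * (infsum (\<lambda>x. \<bar>p x * ln (p x)\<bar>) UNIV + real m * t * (ln (2/\<epsilon>) + 1))
       + 2 * (real m * t + P0) + R0"
proof -
  define G where "G = {x. \<epsilon> \<le> q x}"
  define S where "S = sum q G"
  define h where "h = (\<lambda>x. p x * ln (p x))"
  define Hs where "Hs = infsum (\<lambda>x. \<bar>h x\<bar>) UNIV"
  define E1 where "E1 = real m * t * (ln (2/\<epsilon>) + 1)"
  define \<sigma> where "\<sigma> = real m * t + P0"
  have psumm: "p summable_on A" for A
    using psum summable_on_subset[of p UNIV A] by (auto simp: has_sum_imp_summable)
  have hsumm: "h summable_on A" for A
    using hsum summable_on_subset[of h UNIV A] by (auto simp: h_def)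
  have habs: "(\<lambda>x. \<bar>h x\<bar>) summable_on A" for A
    using hsumm[of A] summable_on_iff_abs_summable_on_real[of h A] by simp
  have split_m: "sum p {..<m} + infsum p {m..} = 1"
  proof -
    have "infsum p UNIV = infsum p {..<m} + infsum p {m..}"
      by (subst infsum_Un_disjoint[symmetric]) (auto intro: psumm intro!: arg_cong[where f="infsum p"])
    then show ?thesis using infsumI[OF psum] by simp
  qed
  have big_small: "q x < \<epsilon>" if "m \<le> x" for x
  proof -
    have "sum q (insert x {..<m}) \<le> 1" by (rule qF) simp
    then have a: "q x + sum q {..<m} \<le> 1" using that by simp
    have "sum (\<lambda>y. p y - t) {..<m} \<le> sum q {..<m}"
    proof (intro sum_mono)
      fix y assume "y \<in> {..<m}"
      then show "p y - t \<le> q y" using abs_le_D2[OF d1[of y]] by simp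
    qed
    then have "sum p {..<m} - real m * t \<le> sum q {..<m}" by (simp add: sum_subtractf)
    then show ?thesis using a split_m d3 d2 eps by linarith
  qed
  have Gm: "G \<subseteq> {..<m}" using big_small by (force simp: G_def not_le[symmetric])
  have finG: "finite G" using Gm finite_subset by blast
  have cardG: "card G \<le> m" using card_mono[OF _ Gm] by simp
  have pG: "p x \<ge> 3/4*\<epsilon>" if "x \<in> G" for x
    using d1[of x] Gm that d2 by (auto simp: G_def abs_le_iff)
  have qG: "\<epsilon> \<le> q x" "q x \<le> 1" if "x \<in> G" for x
    using that qF[of "{x}"] by (auto simp: G_def)
  define B where "B = {x. p x > 0} - G"
  have BD: "B \<subseteq> D"
  proof
    fix x assume x: "x \<in> B"
    show "x \<in> D"
    proof (cases "m \<le> x")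
      case True then show ?thesis using d4 x by (auto simp: B_def)
    next
      case False
      then have "p x \<le> q x + t" using d1[of x] by (auto simp: abs_le_iff)
      moreover have "q x < \<epsilon>" using x by (auto simp: B_def G_def)
      ultimately have "p x < 2*\<epsilon>" using d2 eps by linarith
      then show ?thesis using d4 x by (auto simp: B_def)
    qed
  qed
  have GA: "G \<subseteq> {x. p x > 0}" using pG eps by force
  have Adec: "{x. p x > 0} = G \<union> B" "G \<inter> B = {}" using GA by (auto simp: B_def)
  have hA: "infsum h {x. p x > 0} = sum h G + infsum h B"
    using Adec infsum_Un_disjoint[OF hsumm hsumm, of G B] finG by simp
  have RB: "\<bar>infsum h B\<bar> \<le> R0"
  proof -
    have "\<bar>infsum h B\<bar> \<le> infsum (\<lambda>x. \<bar>h x\<bar>) B"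
      using norm_infsum_bound[of h B] habs[of B] by simp
    also have "\<dots> \<le> infsum (\<lambda>x. \<bar>h x\<bar>) D"
      using BD by (intro infsum_mono_neutral habs) auto
    finally show ?thesis using d5 by (simp add: h_def)
  qed
  define PB where "PB = infsum p (- G)"
  have PB1: "sum p G + PB = 1"
  proof -
    have "infsum p UNIV = infsum p G + infsum p (-G)"
      by (subst infsum_Un_disjoint[symmetric]) (auto intro: psumm)
    then show ?thesis using infsumI[OF psum] finG by (simp add: PB_def)
  qed
  have PB0: "PB \<ge> 0" unfolding PB_def by (rule infsum_nonneg) (use p0 in auto)
  have PBle: "PB \<le> P0"
  proof -
    have "PB \<le> infsum p D" unfolding PB_def
    proof (rule infsum_mono_neutral[OF psumm psumm])
      fix x assume "x \<in> - G - D"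
      then have "x \<notin> B" using BD by auto
      moreover have "x \<notin> G" using \<open>x \<in> - G - D\<close> by auto
      ultimately show "p x \<le> 0" by (auto simp: B_def not_less)
    qed (auto simp: p0)
    then show ?thesis using d5 by simp
  qed
  have qp_sum: "\<bar>sum (\<lambda>x. q x - p x) G\<bar> \<le> real m * t"
  proof -
    have "\<bar>sum (\<lambda>x. q x - p x) G\<bar> \<le> sum (\<lambda>x. \<bar>q x - p x\<bar>) G" by (rule sum_abs)
    also have "\<dots> \<le> sum (\<lambda>x. t) G" using d1 Gm by (intro sum_mono) auto
    also have "\<dots> = real (card G) * t" by simp
    also have "\<dots> \<le> real m * t" using cardG t0 by (intro mult_right_mono) auto
    finally show ?thesis .
  qed
  have S1: "\<bar>S - 1\<bar> \<le> \<sigma>"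
  proof -
    have "S - 1 = sum (\<lambda>x. q x - p x) G - PB" using PB1 by (simp add: S_def sum_subtractf)
    then show ?thesis using qp_sum PB0 PBle by (simp add: \<sigma>_def abs_le_iff)
  qed
  have Shalf: "S \<ge> 1/2" using S1 d6 by (simp add: \<sigma>_def abs_le_iff)
  have Gne: "G \<noteq> {}" using Shalf by (auto simp: S_def)
  then obtain x0 where "x0 \<in> G" by blast
  have eps43: "\<epsilon> \<le> 4/3" using pG[OF \<open>x0 \<in> G\<close>] p1[of x0] by simp
  have lnpos: "ln (2/\<epsilon>) + 1 \<ge> 0"
  proof -
    have "1 \<le> 2/\<epsilon>" using eps eps43 by (simp add: field_simps)
    then show ?thesis by simp
  qed
  have E1b: "\<bar>sum h G - sum (\<lambda>x. q x * ln (q x)) G\<bar> \<le> E1"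
  proof -
    have "\<bar>sum h G - sum (\<lambda>x. q x * ln (q x)) G\<bar> = \<bar>sum (\<lambda>x. p x * ln (p x) - q x * ln (q x)) G\<bar>"
      by (simp add: h_def sum_subtractf)
    also have "\<dots> \<le> sum (\<lambda>x. \<bar>p x * ln (p x) - q x * ln (q x)\<bar>) G" by (rule sum_abs)
    also have "\<dots> \<le> sum (\<lambda>x. t * (ln (2/\<epsilon>) + 1)) G"
    proof (intro sum_mono)
      fix x assume x: "x \<in> G"
      have "\<bar>p x * ln (p x) - q x * ln (q x)\<bar> \<le> \<bar>p x - q x\<bar> * (ln (1/(\<epsilon>/2)) + 1)"
        using pG[OF x] qG[OF x] p1[of x] eps by (intro xlnx_diff) auto
      then have "\<bar>p x * ln (p x) - q x * ln (q x)\<bar> \<le> \<bar>p x - q x\<bar> * (ln (2/\<epsilon>) + 1)" by simp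
      also have "\<dots> \<le> t * (ln (2/\<epsilon>) + 1)"
        using d1[of x] Gm x lnpos by (intro mult_right_mono) (auto simp: abs_minus_commute)
      finally show "\<bar>p x * ln (p x) - q x * ln (q x)\<bar> \<le> t * (ln (2/\<epsilon>) + 1)" .
    qed
    also have "\<dots> = real (card G) * t * (ln (2/\<epsilon>) + 1)" by simp
    also have "\<dots> \<le> E1" unfolding E1_def using cardG t0 lnpos
      by (intro mult_right_mono) auto
    finally show ?thesis .
  qed
  have Hsb: "\<bar>sum h G\<bar> \<le> Hs"
  proof -
    have "\<bar>sum h G\<bar> \<le> sum (\<lambda>x. \<bar>h x\<bar>) G" by (rule sum_abs)
    also have "\<dots> \<le> Hs" unfolding Hs_def
      using finG by (intro finite_sum_le_infsum habs) auto
    finally show ?thesis .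
  qed
  define c where "c = sum (\<lambda>x. q x * ln (q x)) G"
  have cb: "\<bar>c\<bar> \<le> Hs + E1" using Hsb E1b unfolding c_def by linarith
  have Spos: "S > 0" using Shalf by simp
  have T: "(\<Sum>x\<in>G. (q x / S) * ln (q x / S)) = c / S - ln S"
  proof -
    have "(\<Sum>x\<in>G. (q x / S) * ln (q x / S)) = (\<Sum>x\<in>G. q x * ln (q x) / S - (q x / S) * ln S)"
    proof (intro sum.cong refl)
      fix x assume x: "x \<in> G"
      have "q x > 0" using qG[OF x] eps by linarith
      then show "(q x / S) * ln (q x / S) = q x * ln (q x) / S - (q x / S) * ln S"
        using Spos by (simp add: ln_div algebra_simps)
    qed
    also have "\<dots> = c / S - (sum q G / S) * ln S"
      by (simp add: sum_subtractf c_def sum_divide_distrib sum_distrib_right)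
    also have "sum q G / S = 1" using Spos by (simp add: S_def)
    finally show ?thesis by simp
  qed
  have LS: "\<bar>ln S\<bar> \<le> 2 * \<sigma>" "\<bar>1 - 1/S\<bar> \<le> 2 * \<sigma>" using ln_close_1[OF Shalf] S1 by simp_all
  have cS: "\<bar>c * (1 - 1/S)\<bar> \<le> (Hs + E1) * (2 * \<sigma>)"
    unfolding abs_mult by (intro mult_mono cb LS) (use order_trans[OF abs_ge_zero cb] in auto)
  have main: "\<bar>infsum h {x. p x > 0} - (c / S - ln S)\<bar> \<le> E1 + 2 * \<sigma> * (Hs + E1) + 2 * \<sigma> + R0"
  proof -
    have "infsum h {x. p x > 0} - (c / S - ln S) =
          (sum h G - c) + c * (1 - 1/S) + ln S + infsum h B"
      using hA by (simp add: algebra_simps)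
    then show ?thesis using E1b cS LS RB unfolding c_def[symmetric]
      by (simp add: abs_le_iff algebra_simps)
  qed
  show "finite {x. \<epsilon> \<le> q x}" using finG by (simp add: G_def)
  show "sum q {x. \<epsilon> \<le> q x} > 0" using Spos by (simp add: S_def G_def)
  show "\<bar>infsum (\<lambda>x. p x * ln (p x)) {x. p x > 0}
       - (\<Sum>x\<in>{x. \<epsilon> \<le> q x}. (q x / sum q {x. \<epsilon> \<le> q x}) * ln (q x / sum q {x. \<epsilon> \<le> q x}))\<bar>
     \<le> real m * t * (ln (2/\<epsilon>) + 1)
       + 2 * (real m * t + P0) * (infsum (\<lambda>x. \<bar>p x * ln (p x)\<bar>) UNIV + real m * t * (ln (2/\<epsilon>) + 1))
       + 2 * (real m * t + P0) + R0"
    using main T unfolding G_def[symmetric] S_def[symmetric]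
      E1_def[symmetric] \<sigma>_def[symmetric] by (simp add: Hs_def h_def)
qed




lemma exp_tail_summable:
  fixes \<gamma> :: real assumes g: "\<gamma> > 0"
  shows "summable (\<lambda>n. (real n + 1) * 2 * exp (-2 * real n powr \<gamma>))"
proof -
  define k where "k = nat \<lceil>3/\<gamma>\<rceil> + 1"
  have k0: "k > 0" by (simp add: k_def)
  have kg: "real k * \<gamma> \<ge> 3"
  proof -
    have "3/\<gamma> \<le> real k" unfolding k_def by linarith
    then show ?thesis using g by (simp add: field_simps)
  qed
  define C where "C = 4 * (real k / 2)^k"
  have C0: "C > 0" using k0 by (simp add: C_def)
  show ?thesis
  proof (rule summable_comparison_test'[where N = 1])
    show "summable (\<lambda>n. C * inverse (real n ^ 2))"
      by (intro summable_mult inverse_power_summable) auto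
    fix n :: nat assume n: "1 \<le> n"
    have n0: "real n > 0" using n by simp
    define y where "y = 2 * real n powr \<gamma>"
    have y0: "y \<ge> 0" by (simp add: y_def)
    have "(y / real k)^k \<le> (1 + y / real k)^k"
      using y0 k0 by (intro power_mono) auto
    also have "\<dots> \<le> exp y" using y0 k0 by (intro exp_ge_one_plus_x_over_n_power_n) auto
    finally have e1: "(y / real k)^k \<le> exp y" .
    have f1: "(y / real k)^k = (2 / real k)^k * (real n powr \<gamma>)^k"
      by (simp add: y_def power_mult_distrib power_divide)
    have f2: "(real n powr \<gamma>)^k = real n powr (\<gamma> * real k)"
      using n0 powr_power[of "real n" \<gamma> k] by (simp add: mult.commute)
    have f3: "real n powr (\<gamma> * real k) \<ge> real n powr 3"
      using n kg by (intro powr_mono) (auto simp: mult.commute)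
    have f4: "real n powr 3 = real n ^ 3"
      using n0 powr_realpow[of "real n" 3] by simp
    have f5: "(2 / real k)^k * real n ^ 3 \<le> (2 / real k)^k * (real n powr \<gamma>)^k"
      using f2 f3 f4 by (intro mult_left_mono) auto
    have e2: "(2 / real k)^k * real n ^ 3 \<le> exp y"
      using f5 f1 e1 by linarith
    define w where "w = (real k / 2)^k"
    define v where "v = real n ^ 3"
    have w0: "w > 0" using k0 by (simp add: w_def)
    have v0: "v > 0" using n0 by (simp add: v_def)
    have wi: "(2 / real k)^k = 1 / w" unfolding w_def by (simp add: power_one_over[symmetric])
    have e3: "1 / w * v \<le> exp y" using e2 wi v_def by simp
    have pos: "1 / w * v > 0" using w0 v0 by simp
    have ey: "exp (-2 * real n powr \<gamma>) = inverse (exp y)"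
      by (simp add: y_def exp_minus)
    have "(real n + 1) * 2 * exp (-2 * real n powr \<gamma>) = (real n + 1) * 2 / exp y"
      using ey by (simp add: divide_inverse)
    also have "\<dots> \<le> (real n + 1) * 2 / (1 / w * v)"
    proof (rule divide_left_mono[OF e3])
      show "0 \<le> (real n + 1) * 2" by simp
      show "0 < exp y * (1 / w * v)" using pos w0 v0 by (intro mult_pos_pos) auto
    qed
    also have "\<dots> = (real n + 1) * 2 * w / v"
      using w0 v0 by simp
    also have "\<dots> \<le> (2 * real n) * 2 * w / v"
    proof (rule divide_right_mono)
      show "(real n + 1) * 2 * w \<le> 2 * real n * 2 * w" using n w0 by (intro mult_right_mono) auto
    qed (use v0 in simp)
    also have "\<dots> = C * inverse (real n ^ 2)"
    proof -
      have Cw: "C = 4 * w" by (simp add: C_def w_def)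
      have "2 * real n * 2 * w / v = 4 * w * (real n / real n ^ 3)" by (simp add: v_def)
      also have "real n / real n ^ 3 = inverse (real n ^ 2)" using n0 by (simp add: power3_eq_cube power2_eq_square field_simps)
      finally show ?thesis using Cw by simp
    qed
    finally show "norm ((real n + 1) * 2 * exp (-2 * real n powr \<gamma>)) \<le> C * inverse (real n ^ 2)"
      by simp
  qed
qed

lemma card_sum_ind:
  "real (card {k. k < (n::nat) \<and> X k \<omega> = x}) = (\<Sum>i<n. indicator {x} (X i \<omega>) :: real)"
proof -
  have "(\<Sum>i<n. indicator {x} (X i \<omega>) :: real) = (\<Sum>i\<in>{..<n}. if X i \<omega> = x then 1 else 0)"
    by (intro sum.cong) (auto simp: indicator_def)
  also have "\<dots> = (\<Sum>i\<in>{i\<in>{..<n}. X i \<omega> = x}. 1)"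
    by (subst sum.inter_filter) (auto simp: finite_lessThan)
  also have "{i\<in>{..<n}. X i \<omega> = x} = {k. k < n \<and> X k \<omega> = x}" by auto
  finally show ?thesis by simp
qed

lemma concentration:
  fixes M :: "'a measure" and X :: "nat \<Rightarrow> 'a \<Rightarrow> nat" and \<mu> :: "nat pmf" and \<beta> :: real
  assumes PS: "prob_space M" and ind: "prob_space.indep_vars M (\<lambda>_. count_space UNIV) X UNIV"
    and dist: "\<And>i. distr M (count_space UNIV) (X i) = measure_pmf \<mu>"
    and b0: "0 < \<beta>" and b1: "\<beta> < 1/2"
  shows "AE \<omega> in M. eventually (\<lambda>n. \<forall>x\<le>n. \<bar>emp_mass X n \<omega> x - pmf \<mu> x\<bar> < real n powr (-\<beta>)) sequentially"
proof -
  interpret prob_space M by (rule PS)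
  have Xm[measurable]: "X i \<in> measurable M (count_space UNIV)" for i
    using ind unfolding indep_vars_def by auto
  define Y where "Y = (\<lambda>x i \<omega>. indicator {x} (X i \<omega>) :: real)"
  define B where "B = (\<lambda>n x. {\<omega> \<in> space M. real n * real n powr (-\<beta>) \<le> \<bar>(\<Sum>i<n. Y x i \<omega>) - real n * pmf \<mu> x\<bar>})"
  define A where "A = (\<lambda>n. \<Union>x\<in>{..n}. B n x)"
  have fm[measurable]: "(\<lambda>\<omega>. \<Sum>i<n. Y x i \<omega>) \<in> borel_measurable M" for n x
    unfolding Y_def by (intro borel_measurable_sum measurable_compose[OF Xm]) simp
  have Bm: "B n x \<in> sets M" for n x unfolding B_def by measurable
  have Am: "A n \<in> sets M" for n unfolding A_def using Bm by auto
  have EY: "expectation (Y x i) = pmf \<mu> x" for x i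
  proof -
    have "expectation (Y x i) = integral\<^sup>L (distr M (count_space UNIV) (X i)) (indicator {x})"
      unfolding Y_def by (subst integral_distr) auto
    also have "\<dots> = measure (measure_pmf \<mu>) {x}" by (simp add: dist)
    finally show ?thesis by (simp add: measure_pmf_single)
  qed
  have hoef: "measure M (B n x) \<le> 2 * exp (-2 * real n powr (1 - 2*\<beta>))" if n: "n \<ge> 1" for n x
  proof -
    interpret H: Hoeffding_ineq M "{..<n}" "Y x" "\<lambda>_. 0" "\<lambda>_. 1" "real n * pmf \<mu> x"
    proof unfold_locales
      show "finite {..<n}" by simp
      show "indep_vars (\<lambda>_. borel) (Y x) {..<n}"
        unfolding Y_def by (rule indep_vars_compose2[OF indep_vars_subset[OF ind]]) auto
      show "AE \<omega> in M. Y x i \<omega> \<in> {0..1}" for i by (simp add: Y_def indicator_def)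
    qed (simp_all add: EY)
    have n0: "real n > 0" using n by simp
    have e1: "real n * real n powr (-\<beta>) = real n powr (1 - \<beta>)"
      using powr_mult_base[of "real n" "-\<beta>"] by simp
    have e2: "(real n powr (1-\<beta>))^2 = real n powr (2 - 2*\<beta>)"
      using powr_add[of "real n" "1-\<beta>" "1-\<beta>"] by (simp add: power2_eq_square)
    have e3: "real n powr (2 - 2*\<beta>) / real n = real n powr (1 - 2*\<beta>)"
      using powr_diff[of "real n" "2 - 2*\<beta>" 1] n0 by simp
    have h1: "measure M (B n x) \<le> 2 * exp (-2 * (real n * real n powr (-\<beta>))\<^sup>2 / (\<Sum>i<n. (1 - (0::real))\<^sup>2))"
      unfolding B_def using H.Hoeffding_ineq_abs_ge[of "real n * real n powr (-\<beta>)"] n by simp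
    have h2: "(real n * real n powr (-\<beta>))\<^sup>2 / (\<Sum>i<n. (1 - (0::real))\<^sup>2) = real n powr (1 - 2*\<beta>)"
      using e1 e2 e3 by simp
    have h3: "-2 * (real n * real n powr (-\<beta>))\<^sup>2 / (\<Sum>i<n. (1 - (0::real))\<^sup>2) = -2 * real n powr (1 - 2*\<beta>)"
      using h2 by (metis times_divide_eq_right)
    show ?thesis using h1[unfolded h3] .
  qed
  have mA: "measure M (A n) \<le> (real n + 1) * 2 * exp (-2 * real n powr (1 - 2*\<beta>))" if n: "n \<ge> 1" for n
  proof -
    have "measure M (A n) \<le> (\<Sum>x\<in>{..n}. measure M (B n x))"
      unfolding A_def by (rule finite_measure_subadditive_finite) (use Bm in auto)
    also have "\<dots> \<le> (\<Sum>x\<in>{..n}. 2 * exp (-2 * real n powr (1 - 2*\<beta>)))"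
      by (intro sum_mono hoef n)
    also have "\<dots> = (real n + 1) * 2 * exp (-2 * real n powr (1 - 2*\<beta>))" by simp
    finally show ?thesis .
  qed
  have summ: "summable (\<lambda>n. measure M (A n))"
  proof (rule summable_comparison_test'[OF exp_tail_summable[of "1 - 2*\<beta>"], where N = 1])
    show "0 < 1 - 2*\<beta>" using b1 by simp
    fix n :: nat assume "1 \<le> n"
    then show "norm (measure M (A n)) \<le> (real n + 1) * 2 * exp (-2 * real n powr (1 - 2*\<beta>))"
      using mA by simp
  qed
  have "AE \<omega> in M. eventually (\<lambda>n. \<omega> \<in> space M - A n) sequentially"
  proof (rule borel_cantelli_AE1)
    show "A n \<in> sets M" for n by (rule Am)
    show "emeasure M (A n) < \<infinity>" for n by (simp add: less_top[symmetric])
    show "summable (\<lambda>n. measure M (A n))" by (rule summ)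
  qed
  then show ?thesis
  proof (rule eventually_mono)
    fix \<omega> assume ev: "eventually (\<lambda>n. \<omega> \<in> space M - A n) sequentially"
    show "eventually (\<lambda>n. \<forall>x\<le>n. \<bar>emp_mass X n \<omega> x - pmf \<mu> x\<bar> < real n powr (-\<beta>)) sequentially"
      using eventually_conj[OF ev eventually_ge_at_top[of "1::nat"]]
    proof (rule eventually_mono)
      fix n assume n: "\<omega> \<in> space M - A n \<and> 1 \<le> n"
      show "\<forall>x\<le>n. \<bar>emp_mass X n \<omega> x - pmf \<mu> x\<bar> < real n powr (-\<beta>)"
      proof (intro allI impI)
        fix x assume x: "x \<le> n"
        have n0: "real n > 0" using n by simp
        have "\<omega> \<notin> B n x" using n x by (auto simp: A_def)
        then have lt: "\<bar>(\<Sum>i<n. Y x i \<omega>) - real n * pmf \<mu> x\<bar> < real n * real n powr (-\<beta>)"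
          using n by (auto simp: B_def)
        have "emp_mass X n \<omega> x - pmf \<mu> x = ((\<Sum>i<n. Y x i \<omega>) - real n * pmf \<mu> x) / real n"
          using n0 by (simp add: emp_mass_def card_sum_ind Y_def field_simps)
        then have "\<bar>emp_mass X n \<omega> x - pmf \<mu> x\<bar> = \<bar>(\<Sum>i<n. Y x i \<omega>) - real n * pmf \<mu> x\<bar> / real n"
          using n0 by simp
        also have "\<dots> < real n * real n powr (-\<beta>) / real n"
          using lt n0 by (intro divide_strict_right_mono) auto
        also have "\<dots> = real n powr (-\<beta>)" using n0 by simp
        finally show "\<bar>emp_mass X n \<omega> x - pmf \<mu> x\<bar> < real n powr (-\<beta>)" .
      qed
    qed
  qed
qed


lemma pt_bounds:
  fixes p :: "nat \<Rightarrow> real" and \<alpha> k0 k1 N :: real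
  assumes p0: "\<And>x. 0 \<le> p x" and p1: "\<And>x. p x \<le> 1"
    and a0: "\<alpha> > 0" and k0: "0 < k0" and k1: "0 < k1"
    and pb: "\<And>x. real x \<ge> N \<Longrightarrow> k0 * exp (- \<alpha> * real x) \<le> p x \<and> p x \<le> k1 * exp (- \<alpha> * real x)"
    and x: "real x \<ge> N"
  shows "p x \<le> k1 * exp (-\<alpha>) ^ x"
    and "\<bar>p x * ln (p x)\<bar> \<le> k1 * (\<alpha> * (real x * exp (-\<alpha>) ^ x) + \<bar>ln k0\<bar> * exp (-\<alpha>) ^ x)"
proof -
  have r: "exp (- \<alpha> * real x) = exp (-\<alpha>) ^ x"
    using exp_of_nat_mult[of x "-\<alpha>"] by (simp add: mult.commute)
  show px: "p x \<le> k1 * exp (-\<alpha>) ^ x" using pb[OF x] r by simp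
  have lo: "k0 * exp (-\<alpha>) ^ x \<le> p x" using pb[OF x] r by simp
  show "\<bar>p x * ln (p x)\<bar> \<le> k1 * (\<alpha> * (real x * exp (-\<alpha>) ^ x) + \<bar>ln k0\<bar> * exp (-\<alpha>) ^ x)"
  proof (cases "p x = 0")
    case True
    have "0 \<le> k1 * (\<alpha> * (real x * exp (-\<alpha>) ^ x) + \<bar>ln k0\<bar> * exp (-\<alpha>) ^ x)"
      using a0 k1 by (intro mult_nonneg_nonneg add_nonneg_nonneg) auto
    then show ?thesis using True by simp
  next
    case False
    then have pp: "p x > 0" using p0[of x] by simp
    have lnle: "ln (p x) \<le> 0" using pp p1[of x] by simp
    have rp: "exp (-\<alpha>) ^ x > 0" by simp
    have lpos: "k0 * exp (-\<alpha>) ^ x > 0" using k0 rp by simp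
    have "ln (k0 * exp (-\<alpha>) ^ x) \<le> ln (p x)" using lo lpos by simp
    moreover have "ln (k0 * exp (-\<alpha>) ^ x) = ln k0 + ln (exp (-\<alpha>) ^ x)"
      using k0 rp by (simp add: ln_mult)
    moreover have "ln (exp (-\<alpha>) ^ x) = real x * (-\<alpha>)"
      using ln_realpow[of "exp (-\<alpha>)" x] by simp
    moreover have "real x * (-\<alpha>) = - (\<alpha> * real x)" by simp
    moreover have "- ln k0 \<le> \<bar>ln k0\<bar>" by simp
    ultimately have lb: "- ln (p x) \<le> \<alpha> * real x + \<bar>ln k0\<bar>" by linarith
    have "\<bar>p x * ln (p x)\<bar> = p x * (- ln (p x))" using pp lnle by (simp add: abs_mult)
    also have "\<dots> \<le> p x * (\<alpha> * real x + \<bar>ln k0\<bar>)" using lb pp by (intro mult_left_mono) auto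
    also have "\<dots> \<le> k1 * exp (-\<alpha>) ^ x * (\<alpha> * real x + \<bar>ln k0\<bar>)"
      using px a0 by (intro mult_right_mono) auto
    also have "\<dots> = k1 * (\<alpha> * (real x * exp (-\<alpha>) ^ x) + \<bar>ln k0\<bar> * exp (-\<alpha>) ^ x)"
      by (simp add: algebra_simps)
    finally show ?thesis .
  qed
qed

lemma tail_lemma:
  fixes p :: "nat \<Rightarrow> real" and \<alpha> k0 k1 N :: real and m0 :: nat and D :: "nat set"
  assumes p0: "\<And>x. 0 \<le> p x" and p1: "\<And>x. p x \<le> 1"
    and a0: "\<alpha> > 0" and k0: "0 < k0" and k01: "k0 \<le> k1"
    and pb: "\<And>x. real x \<ge> N \<Longrightarrow> k0 * exp (- \<alpha> * real x) \<le> p x \<and> p x \<le> k1 * exp (- \<alpha> * real x)"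
    and D: "D \<subseteq> {m0..}" "\<And>x. x \<in> D \<Longrightarrow> real x \<ge> N"
  shows "infsum p D \<le> k1 * (exp (-\<alpha>) ^ m0 / (1 - exp (-\<alpha>)))"
    and "infsum (\<lambda>x. \<bar>p x * ln (p x)\<bar>) D \<le> k1 * (\<alpha> * (exp (-\<alpha>) ^ m0 * (real m0 / (1 - exp (-\<alpha>))
            + (\<Sum>j. real j * exp (-\<alpha>) ^ j))) + \<bar>ln k0\<bar> * (exp (-\<alpha>) ^ m0 / (1 - exp (-\<alpha>))))"
proof -
  define r where "r = exp (-\<alpha>)"
  have r0: "0 \<le> r" "r < 1" using a0 by (auto simp: r_def)
  have k1p: "k1 > 0" using k0 k01 by simp
  have S1: "((\<lambda>x. k1 * r^x) has_sum (k1 * (r^m0 / (1-r)))) {m0..}"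
    by (rule has_sum_shift_nonneg) (use sums_mult[OF tail_sums(1)[OF r0]] k1p r0 in auto)
  have S2: "((\<lambda>x. k1 * (\<alpha> * (real x * r^x) + \<bar>ln k0\<bar> * r^x)) has_sum
      (k1 * (\<alpha> * (r^m0 * (real m0/(1-r) + (\<Sum>j. real j * r^j))) + \<bar>ln k0\<bar> * (r^m0 / (1-r))))) {m0..}"
  proof (rule has_sum_shift_nonneg)
    show "(\<lambda>j. k1 * (\<alpha> * (real (m0 + j) * r ^ (m0 + j)) + \<bar>ln k0\<bar> * r ^ (m0 + j))) sums
      (k1 * (\<alpha> * (r^m0 * (real m0/(1-r) + (\<Sum>j. real j * r^j))) + \<bar>ln k0\<bar> * (r^m0 / (1-r))))"
      by (intro sums_mult sums_add tail_sums[OF r0])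
  qed (use k1p r0 a0 in auto)
  show "infsum p D \<le> k1 * (exp (-\<alpha>) ^ m0 / (1 - exp (-\<alpha>)))"
  proof -
    have "infsum p D \<le> infsum (\<lambda>x. k1 * r^x) {m0..}"
    proof (rule infsum_mono_neutral)
      show "(\<lambda>x. k1 * r^x) summable_on {m0..}" using S1 by (rule has_sum_imp_summable)
      show "p summable_on D"
        by (rule summable_on_comparison_test[of "\<lambda>x. k1 * r^x"])
           (use summable_on_subset[OF has_sum_imp_summable[OF S1] D(1)] pt_bounds(1)[OF p0 p1 a0 k0 k1p pb D(2)] p0 in \<open>auto simp: r_def\<close>)
      show "p x \<le> k1 * r^x" if "x \<in> D \<inter> {m0..}" for x
        using pt_bounds(1)[OF p0 p1 a0 k0 k1p pb D(2)] that by (auto simp: r_def)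
    qed (use D k1p r0 in auto)
    also have "\<dots> = k1 * (r^m0 / (1-r))" using S1 by (rule infsumI)
    finally show ?thesis by (simp add: r_def)
  qed
  show "infsum (\<lambda>x. \<bar>p x * ln (p x)\<bar>) D \<le> k1 * (\<alpha> * (exp (-\<alpha>) ^ m0 * (real m0 / (1 - exp (-\<alpha>))
            + (\<Sum>j. real j * exp (-\<alpha>) ^ j))) + \<bar>ln k0\<bar> * (exp (-\<alpha>) ^ m0 / (1 - exp (-\<alpha>))))"
  proof -
    have "infsum (\<lambda>x. \<bar>p x * ln (p x)\<bar>) D \<le> infsum (\<lambda>x. k1 * (\<alpha> * (real x * r^x) + \<bar>ln k0\<bar> * r^x)) {m0..}"
    proof (rule infsum_mono_neutral)
      show "(\<lambda>x. k1 * (\<alpha> * (real x * r^x) + \<bar>ln k0\<bar> * r^x)) summable_on {m0..}" using S2 by (rule has_sum_imp_summable)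
      show "(\<lambda>x. \<bar>p x * ln (p x)\<bar>) summable_on D"
        by (rule summable_on_comparison_test[of "\<lambda>x. k1 * (\<alpha> * (real x * r^x) + \<bar>ln k0\<bar> * r^x)"])
           (use summable_on_subset[OF has_sum_imp_summable[OF S2] D(1)] pt_bounds(2)[OF p0 p1 a0 k0 k1p pb D(2)] in \<open>auto simp: r_def\<close>)
      show "\<bar>p x * ln (p x)\<bar> \<le> k1 * (\<alpha> * (real x * r^x) + \<bar>ln k0\<bar> * r^x)" if "x \<in> D \<inter> {m0..}" for x
        using pt_bounds(2)[OF p0 p1 a0 k0 k1p pb D(2)] that by (auto simp: r_def)
    qed (use D k1p r0 a0 in auto)
    also have "\<dots> = k1 * (\<alpha> * (r^m0 * (real m0/(1-r) + (\<Sum>j. real j * r^j))) + \<bar>ln k0\<bar> * (r^m0 / (1-r)))"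
      using S2 by (rule infsumI)
    finally show ?thesis by (simp add: r_def)
  qed
qed

lemma hsum_lemma:
  fixes p :: "nat \<Rightarrow> real" and \<alpha> k0 k1 N :: real
  assumes p0: "\<And>x. 0 \<le> p x" and p1: "\<And>x. p x \<le> 1"
    and a0: "\<alpha> > 0" and k0: "0 < k0" and k01: "k0 \<le> k1"
    and pb: "\<And>x. real x \<ge> N \<Longrightarrow> k0 * exp (- \<alpha> * real x) \<le> p x \<and> p x \<le> k1 * exp (- \<alpha> * real x)"
  shows "(\<lambda>x. p x * ln (p x)) summable_on UNIV"
proof -
  define n0 where "n0 = nat \<lceil>N\<rceil>"
  define r where "r = exp (-\<alpha>)"
  have r0: "0 \<le> r" "r < 1" using a0 by (auto simp: r_def)
  have k1p: "k1 > 0" using k0 k01 by simp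
  have S2: "((\<lambda>x. k1 * (\<alpha> * (real x * r^x) + \<bar>ln k0\<bar> * r^x)) has_sum
      (k1 * (\<alpha> * (r^n0 * (real n0/(1-r) + (\<Sum>j. real j * r^j))) + \<bar>ln k0\<bar> * (r^n0 / (1-r))))) {n0..}"
  proof (rule has_sum_shift_nonneg)
    show "(\<lambda>j. k1 * (\<alpha> * (real (n0 + j) * r ^ (n0 + j)) + \<bar>ln k0\<bar> * r ^ (n0 + j))) sums
      (k1 * (\<alpha> * (r^n0 * (real n0/(1-r) + (\<Sum>j. real j * r^j))) + \<bar>ln k0\<bar> * (r^n0 / (1-r))))"
      by (intro sums_mult sums_add tail_sums[OF r0])
  qed (use k1p r0 a0 in auto)
  have Nn: "real x \<ge> N" if "x \<in> {n0..}" for x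
  proof -
    have "N \<le> real n0" unfolding n0_def by (rule real_nat_ceiling_ge)
    also have "real n0 \<le> real x" using that by simp
    finally show ?thesis .
  qed
  have "(\<lambda>x. \<bar>p x * ln (p x)\<bar>) summable_on {n0..}"
    by (rule summable_on_comparison_test[OF has_sum_imp_summable[OF S2]])
       (use pt_bounds(2)[OF p0 p1 a0 k0 k1p pb Nn] in \<open>auto simp: r_def\<close>)
  then have "(\<lambda>x. p x * ln (p x)) summable_on {n0..}"
    using summable_on_iff_abs_summable_on_real by auto
  moreover have "(\<lambda>x. p x * ln (p x)) summable_on {..<n0}" by simp
  ultimately have "(\<lambda>x. p x * ln (p x)) summable_on ({..<n0} \<union> {n0..})"
    by (intro summable_on_union)
  moreover have "{..<n0} \<union> {n0..} = (UNIV :: nat set)" by auto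
  ultimately show ?thesis by simp
qed


lemma pmf_has_sum1: "(pmf \<mu> has_sum 1) UNIV"
proof -
  have a: "Infinite_Sum.abs_summable_on (pmf \<mu>) UNIV" using abs_summable_equivalent pmf_abs_summable by blast
  have s: "pmf \<mu> summable_on UNIV" using a summable_on_iff_abs_summable_on_real by blast
  have "infsum (pmf \<mu>) UNIV = 1"
    using infsetsum_infsum[OF pmf_abs_summable, of \<mu> UNIV] infsetsum_pmf_eq_1[of \<mu> UNIV] by simp
  then show ?thesis using s has_sum_infsum by fastforce
qed

lemma emp_sum_le1:
  assumes "finite F"
  shows "sum (emp_mass X n \<omega>) F \<le> 1"
proof (cases "n = 0")
  case True then show ?thesis by (simp add: emp_mass_def)
next
  case False
  have "sum (emp_mass X n \<omega>) F = (\<Sum>x\<in>F. \<Sum>i<n. indicator {x} (X i \<omega>) :: real) / real n"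
    by (simp add: emp_mass_def card_sum_ind sum_divide_distrib)
  also have "(\<Sum>x\<in>F. \<Sum>i<n. indicator {x} (X i \<omega>) :: real) = (\<Sum>i<n. \<Sum>x\<in>F. indicator {x} (X i \<omega>))"
    by (rule sum.swap)
  also have "\<dots> \<le> (\<Sum>i<n. (1::real))"
  proof (rule sum_mono)
    fix i
    have "(\<Sum>x\<in>F. indicator {x} (X i \<omega>) :: real) = (\<Sum>x\<in>F. if x = X i \<omega> then 1 else 0)"
      by (intro sum.cong) (auto simp: indicator_def)
    also have "\<dots> = (if X i \<omega> \<in> F then 1 else 0)" using assms by (simp add: sum.delta)
    finally show "(\<Sum>x\<in>F. indicator {x} (X i \<omega>) :: real) \<le> 1" by simp
  qed
  finally show ?thesis using False by (simp add: divide_right_mono)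
qed


lemma ln_poly_bound:
  fixes a b \<delta> :: real
  assumes "\<delta> > 0" "a \<ge> 0" "b \<ge> 0" "n \<ge> 1"
  shows "a + b * ln (real n) \<le> (a + b/\<delta>) * real n powr \<delta>"
proof -
  have n1: "real n \<ge> 1" using assms by simp
  have l: "ln (real n) \<le> real n powr \<delta> / \<delta>" using ln_powr_bound[OF n1 assms(1)] .
  have u: "1 \<le> real n powr \<delta>" using n1 assms(1) by (simp add: ge_one_powr_ge_zero)
  have "a \<le> a * real n powr \<delta>" using u assms by (simp add: mult_le_cancel_left1)
  moreover have "b * ln (real n) \<le> b * (real n powr \<delta> / \<delta>)" using l assms by (intro mult_left_mono) auto
  ultimately show ?thesis by (simp add: algebra_simps)
qed

lemma ent_p:
  "entropy_pmf b p = - infsum (\<lambda>x. p x * ln (p x)) {x. p x > 0} / ln b"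
proof -
  have e: "(\<lambda>x. p x * log b (p x)) = (\<lambda>x. p x * ln (p x) * (1 / ln b))"
    by (simp add: log_def)
  have i: "infsum (\<lambda>x. p x * ln (p x) * (1 / ln b)) {x. p x > 0} = infsum (\<lambda>x. p x * ln (p x)) {x. p x > 0} * (1 / ln b)"
    by (rule infsum_cmult_left')
  show ?thesis unfolding entropy_pmf_def e i by simp
qed

lemma ent_q:
  fixes Q :: "nat \<Rightarrow> real"
  assumes G: "finite G" and S: "S > 0" and Qp: "\<And>x. x \<in> G \<Longrightarrow> Q x > 0"
  shows "entropy_pmf b (\<lambda>x. if x \<in> G then Q x / S else 0) = - (\<Sum>x\<in>G. (Q x / S) * ln (Q x / S)) / ln b"
proof -
  define f where "f = (\<lambda>x. if x \<in> G then Q x / S else 0)"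
  have set: "{x. 0 < f x} = G" using Qp S by (auto simp: f_def)
  have "infsum (\<lambda>x. f x * ln (f x)) {x. 0 < f x} = (\<Sum>x\<in>G. f x * ln (f x))"
    unfolding set using G by (rule infsum_finite)
  also have "\<dots> = (\<Sum>x\<in>G. (Q x / S) * ln (Q x / S))"
    by (rule sum.cong) (auto simp: f_def)
  finally show ?thesis unfolding f_def[symmetric] ent_p by simp
qed

lemma main_det:
  fixes p :: "nat \<Rightarrow> real" and Q :: "nat \<Rightarrow> nat \<Rightarrow> real" and b \<alpha> k0 k1 N \<tau> \<beta> :: real
  assumes p0: "\<And>x. 0 \<le> p x" and p1: "\<And>x. p x \<le> 1" and psum: "(p has_sum 1) UNIV"
    and a0: "\<alpha> > 0" and k0: "0 < k0" and k01: "k0 \<le> k1" and N0: "N > 0"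
    and pb: "\<And>x. real x \<ge> N \<Longrightarrow> k0 * exp (- \<alpha> * real x) \<le> p x \<and> p x \<le> k1 * exp (- \<alpha> * real x)"
    and t0: "0 < \<tau>" and tb: "\<tau> < \<beta>" and b2: "\<beta> < 1/2"
    and Q0: "\<And>n x. 0 \<le> Q n x" and QF: "\<And>n F. finite F \<Longrightarrow> sum (Q n) F \<le> 1"
    and ev: "eventually (\<lambda>n. \<forall>x\<le>n. \<bar>Q n x - p x\<bar> < real n powr (-\<beta>)) sequentially"
    and b1: "b > 1"
  shows "(\<lambda>n. \<bar>entropy_pmf b p - entropy_pmf b (\<lambda>x. if x \<in> {x. real n powr (-\<tau>) \<le> Q n x}
            then Q n x / sum (Q n) {x. real n powr (-\<tau>) \<le> Q n x} else 0)\<bar>)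
         \<in> O(\<lambda>n. real n powr (-\<tau>) * ln (real n))"
proof -
  define r where "r = exp (-\<alpha>)"
  have r0: "0 < r" "r < 1" using a0 by (auto simp: r_def)
  have k1p: "k1 > 0" using k0 k01 by simp
  define c where "c = \<bar>ln (2*k1/(1-r))\<bar> + \<bar>ln (k0/2)\<bar>"
  have c0: "c \<ge> 0" by (simp add: c_def)
  define Cr where "Cr = (\<Sum>j. real j * r^j)"
  have Cr0: "Cr \<ge> 0" unfolding Cr_def using summable_n_pow[of r] r0 by (intro suminf_nonneg) auto
  define Hs where "Hs = infsum (\<lambda>x. \<bar>p x * ln (p x)\<bar>) UNIV"
  have Hs0: "Hs \<ge> 0" unfolding Hs_def by (rule infsum_nonneg) simp
  have hsum: "(\<lambda>x. p x * ln (p x)) summable_on UNIV"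
    by (rule hsum_lemma[OF p0 p1 a0 k0 k01 pb])
  define \<delta> where "\<delta> = (\<beta> - \<tau>)/4"
  have d0: "\<delta> > 0" "2 * \<delta> \<le> 1" using tb b2 t0 by (auto simp: \<delta>_def)
  define Am where "Am = (N + 1 + c/\<alpha>) + (\<tau>/\<alpha>)/\<delta>"
  define Al where "Al = (ln 2 + 1) + \<tau>/\<delta>"
  have Am0: "Am \<ge> 0" using N0 c0 a0 t0 d0 by (simp add: Am_def)
  have Al0: "Al \<ge> 0" using t0 d0 by (simp add: Al_def)
  define Kp where "Kp = k1 * exp c / (1 - r)"
  have Kp0: "Kp \<ge> 0" using k1p r0 by (simp add: Kp_def)
  define Kr1 where "Kr1 = k1 * exp c * (\<alpha> * (1/(1-r) + Cr) + \<bar>ln k0\<bar> / (1-r))"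
  define Kr2 where "Kr2 = k1 * exp c * \<tau> / (1-r)"
  define Kbig where "Kbig = 4 * Am + Am * Al + 4"
  have KB0: "Kbig \<ge> 0" using Am0 Al0 mult_nonneg_nonneg[OF Am0 Al0] unfolding Kbig_def by simp
  define e0 where "e0 = min 1 (1 / (2 * (1/4 + Kp)))"
  have e00: "e0 > 0" using Kp0 by (simp add: e0_def)
  define K where "K = 1 + 2 * (1/4 + Kp) * (Hs + 2) + Kr1 + Kr2"
  have eps0: "((\<lambda>n. real n powr (-\<tau>)) \<longlongrightarrow> 0) sequentially"
    using t0 by (intro tendsto_neg_powr filterlim_real_sequentially) auto
  have evA: "eventually (\<lambda>n. real n powr (-\<tau>) \<le> e0) sequentially"
    using order_tendstoD(2)[OF eps0 e00] by (rule eventually_mono) simp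
  have evB: "eventually (\<lambda>n. Kbig \<le> real n powr \<delta>) sequentially"
  proof -
    have "((\<lambda>n. real n powr (-\<delta>)) \<longlongrightarrow> 0) sequentially"
      using d0 by (intro tendsto_neg_powr filterlim_real_sequentially) auto
    moreover have "0 < 1 / (Kbig + 1)" using KB0 by simp
    ultimately have "eventually (\<lambda>n. real n powr (-\<delta>) < 1 / (Kbig + 1)) sequentially"
      by (rule order_tendstoD(2))
    moreover have "eventually (\<lambda>n. n \<ge> 1) sequentially" by (rule eventually_ge_at_top)
    ultimately show ?thesis
    proof (rule eventually_mono[OF eventually_conj])
      fix n :: nat assume h: "real n powr (-\<delta>) < 1 / (Kbig + 1) \<and> n \<ge> 1"
      have Kp: "Kbig + 1 > 0" using KB0 by simp
      have pos: "real n powr \<delta> > 0" using h by simp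
      have "inverse (real n powr \<delta>) < 1 / (Kbig + 1)" using h by (simp add: powr_minus)
      then have "Kbig + 1 < real n powr \<delta>" using pos Kp by (simp add: field_simps)
      then show "Kbig \<le> real n powr \<delta>" by simp
    qed
  qed
  have evC: "eventually (\<lambda>n. \<forall>x\<in>{x. real x < N \<and> p x > 0}. 2 * real n powr (-\<tau>) \<le> p x) sequentially"
  proof (rule eventually_ball_finite)
    show "finite {x. real x < N \<and> p x > 0}"
      by (rule finite_subset[of _ "{..nat \<lceil>N\<rceil>}"]) (auto, linarith)
    show "\<forall>x\<in>{x. real x < N \<and> p x > 0}. eventually (\<lambda>n. 2 * real n powr (-\<tau>) \<le> p x) sequentially"
    proof
      fix x assume "x \<in> {x. real x < N \<and> p x > 0}"
      then have "p x / 2 > 0" by simp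
      from order_tendstoD(2)[OF eps0 this]
      show "eventually (\<lambda>n. 2 * real n powr (-\<tau>) \<le> p x) sequentially"
        by (rule eventually_mono) simp
    qed
  qed
  have evD: "eventually (\<lambda>n. n \<ge> 3) sequentially" by (rule eventually_ge_at_top)
  show ?thesis
  proof (rule bigoI[where c = "K / ln b"])
    show "eventually (\<lambda>n. norm \<bar>entropy_pmf b p - entropy_pmf b (\<lambda>x. if x \<in> {x. real n powr (-\<tau>) \<le> Q n x}
            then Q n x / sum (Q n) {x. real n powr (-\<tau>) \<le> Q n x} else 0)\<bar>
          \<le> K / ln b * norm (real n powr (-\<tau>) * ln (real n))) at_top"
      using ev evA evB evC evD
    proof (eventually_elim)
      case (elim n)
      note ev1 = elim(1) and evA1 = elim(2) and evB1 = elim(3) and evC1 = elim(4) and n3 = elim(5)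
      define \<epsilon> where "\<epsilon> = real n powr (-\<tau>)"
      define t where "t = real n powr (-\<beta>)"
      define L where "L = \<tau> * ln (real n)"
      define u where "u = real n powr \<delta>"
      have n0: "real n > 0" and n1: "real n \<ge> 1" using n3 by auto
      have lnn: "ln (real n) \<ge> 1"
      proof -
        have "exp 1 \<le> real n" using e_less_272 n3 by linarith
        then have "ln (exp 1) \<le> ln (real n)" using n0 by (subst ln_le_cancel_iff) auto
        then show ?thesis by simp
      qed
      have eps: "\<epsilon> > 0" using n0 by (simp add: \<epsilon>_def)
      have eps1: "\<epsilon> \<le> 1" and epse0: "\<epsilon> \<le> e0" using evA1 by (auto simp: \<epsilon>_def e0_def)
      have eL: "exp (-L) = \<epsilon>" using n0 by (simp add: \<epsilon>_def L_def powr_def)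
      have L0: "L \<ge> 0" using t0 n1 by (simp add: L_def)
      have uK: "Kbig \<le> u" using evB1 by (simp add: u_def)
      have u4: "4 \<le> u" and uAm: "4 * Am \<le> u" and uAmAl: "Am * Al \<le> u"
        using uK Am0 Al0 mult_nonneg_nonneg[OF Am0 Al0] unfolding Kbig_def by linarith+
      have u1: "u \<ge> 1" using u4 by simp
      have u0: "u > 0" using u4 by simp
      have t_eq: "t = \<epsilon> / u^4"
      proof -
        have "-\<beta> = -\<tau> + -(4 * \<delta>)" unfolding \<delta>_def by (simp add: field_simps)
        then have "t = real n powr ((-\<tau>) + (-(4 * \<delta>)))" by (simp only: t_def)
        then have "t = real n powr (-\<tau>) * real n powr (-(4 * \<delta>))" by (simp only: powr_add)
        also have "real n powr (-(4 * \<delta>)) = inverse (u^4)"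
          using powr_power[of "real n" \<delta> 4] n0 by (simp add: powr_minus u_def)
        finally show ?thesis by (simp add: \<epsilon>_def divide_inverse)
      qed
      have t0': "t \<ge> 0" by (simp add: t_def)
      define m where "m = nat \<lceil>N + (L + c)/\<alpha>\<rceil>"
      define m0 where "m0 = nat \<lceil>(L - c)/\<alpha>\<rceil>"
      define D where "D = {x. N \<le> real x \<and> (L - c)/\<alpha> \<le> real x}"
      have mnn: "N + (L + c)/\<alpha> \<ge> 0" using N0 L0 c0 a0 by simp
      have m_lo: "N + (L + c)/\<alpha> \<le> real m" unfolding m_def by (rule real_nat_ceiling_ge)
      have m_up: "real m \<le> N + (L + c)/\<alpha> + 1"
      proof -
        have "\<lceil>N + (L + c)/\<alpha>\<rceil> \<ge> 0" using mnn by simp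
        then have "real m = real_of_int \<lceil>N + (L + c)/\<alpha>\<rceil>" unfolding m_def by simp
        also have "\<dots> \<le> N + (L + c)/\<alpha> + 1" by (rule of_int_ceiling_le_add_one)
        finally show ?thesis .
      qed
      have m0_up: "real m0 \<le> L/\<alpha> + 1"
      proof (cases "(L - c)/\<alpha> \<ge> 0")
        case True
        then have "real m0 = real_of_int \<lceil>(L - c)/\<alpha>\<rceil>" unfolding m0_def by simp
        also have "\<dots> \<le> (L - c)/\<alpha> + 1" by (rule of_int_ceiling_le_add_one)
        also have "\<dots> \<le> L/\<alpha> + 1" using c0 a0 by (simp add: divide_right_mono)
        finally show ?thesis .
      next
        case False
        then have "\<lceil>(L - c)/\<alpha>\<rceil> \<le> 0" by (simp add: ceiling_le_iff)
        then have "m0 = 0" unfolding m0_def by simp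
        then show ?thesis using L0 a0 by simp
      qed
      have mAm: "real m \<le> Am * u"
      proof -
        have "real m \<le> (N + 1 + c/\<alpha>) + (\<tau>/\<alpha>) * ln (real n)"
          using m_up a0 by (simp add: L_def add_divide_distrib)
        also have "\<dots> \<le> ((N + 1 + c/\<alpha>) + (\<tau>/\<alpha>)/\<delta>) * real n powr \<delta>"
          using N0 c0 a0 t0 d0 n1 by (intro ln_poly_bound) auto
        finally show ?thesis by (simp add: Am_def u_def)
      qed
      have lnAl: "ln (2/\<epsilon>) + 1 \<le> Al * u"
      proof -
        have lne: "ln \<epsilon> = -L" unfolding eL[symmetric] by simp
        have "ln (2/\<epsilon>) = ln 2 - ln \<epsilon>" using eps by (simp add: ln_div)
        then have "ln (2/\<epsilon>) = ln 2 + L" using lne by simp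
        then have "ln (2/\<epsilon>) + 1 = (ln 2 + 1) + \<tau> * ln (real n)" by (simp add: L_def)
        also have "\<dots> \<le> ((ln 2 + 1) + \<tau>/\<delta>) * real n powr \<delta>"
          using t0 d0 n1 by (intro ln_poly_bound) auto
        finally show ?thesis by (simp add: Al_def u_def)
      qed
      have lnp: "ln (2/\<epsilon>) + 1 \<ge> 0"
      proof -
        have "1 \<le> 2/\<epsilon>" using eps eps1 by (simp add: field_simps)
        then show ?thesis by simp
      qed
      have uu: "u \<le> u^2" "u \<le> u^3" "u \<le> u^4"
        using power_increasing[of 1 2 u] power_increasing[of 1 3 u] power_increasing[of 1 4 u] u1 by simp_all
      have tle: "t \<le> \<epsilon>/4"
      proof -
        have "4 \<le> u^4" using u4 uu by linarith
        then show ?thesis unfolding t_eq using eps by (intro divide_left_mono) auto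
      qed
      have mt: "real m * t \<le> \<epsilon>/4"
      proof -
        have "real m * t \<le> Am * u * (\<epsilon> / u^4)" unfolding t_eq using mAm eps u0 by (intro mult_right_mono) auto
        also have "\<dots> = \<epsilon> * (Am / u^3)" using u0 by (simp add: field_simps power_eq_if)
        also have "Am / u^3 \<le> (u/4) / u^3" using uAm u0 by (intro divide_right_mono) auto
        also have "(u/4) / u^3 = 1 / (4 * u^2)" using u0 by (simp add: field_simps power_eq_if)
        also have "\<dots> \<le> 1/4" using u1 uu by (simp add: field_simps)
        finally show ?thesis using eps by (simp add: mult_left_mono)
      qed
      have E1le: "real m * t * (ln (2/\<epsilon>) + 1) \<le> \<epsilon>"
      proof -
        have "real m * t * (ln (2/\<epsilon>) + 1) \<le> (Am * u * (\<epsilon> / u^4)) * (Al * u)"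
          using mAm lnAl lnp eps u0 t0' t_eq by (intro mult_mono) auto
        also have "\<dots> = \<epsilon> * ((Am * Al) / u^2)" using u0 by (simp add: field_simps power_eq_if)
        also have "(Am * Al) / u^2 \<le> 1" using uAmAl uu u0 by (simp add: field_simps)
        finally show ?thesis using eps by (simp add: mult_left_mono)
      qed
      have mn: "m \<le> n"
      proof -
        have "real m \<le> u * u" using mAm uAm u0 Am0 by (smt (verit) mult_right_mono)
        also have "u * u = real n powr (2 * \<delta>)" by (simp add: u_def powr_add[symmetric])
        also have "\<dots> \<le> real n powr 1" using d0 n1 by (intro powr_mono) auto
        finally show ?thesis using n0 by simp
      qed
      have rpow: "r ^ k = exp (- (\<alpha> * real k))" for k :: nat
        unfolding r_def using exp_of_nat_mult[of k "-\<alpha>"] by (simp add: mult.commute)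
      have Nm: "N \<le> real x" if "m \<le> x" for x
      proof -
        have "N \<le> N + (L + c)/\<alpha>" using L0 c0 a0 by simp
        also have "\<dots> \<le> real m" by (rule m_lo)
        also have "\<dots> \<le> real x" using that by simp
        finally show ?thesis .
      qed
      have d3: "infsum p {m..} \<le> \<epsilon>/2"
      proof -
        have A: "infsum p {m..} \<le> k1 * (exp (-\<alpha>) ^ m / (1 - exp (-\<alpha>)))"
          by (rule tail_lemma(1)[OF p0 p1 a0 k0 k01 pb order_refl]) (auto intro: Nm)
        have B: "r ^ m \<le> \<epsilon> * exp (-c)"
        proof -
          have "\<alpha> * real m \<ge> \<alpha> * (N + (L + c)/\<alpha>)" using m_lo a0 by (intro mult_left_mono) auto
          also have "\<alpha> * (N + (L + c)/\<alpha>) = \<alpha> * N + (L + c)" using a0 by (simp add: field_simps)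
          finally have "\<alpha> * real m \<ge> L + c" using a0 N0 by (smt (verit) mult_pos_pos)
          then have "r ^ m \<le> exp (-(L + c))" unfolding rpow by simp
          also have "exp (-(L + c)) = exp (-L) * exp (-c)" by (simp add: exp_add[symmetric])
          finally show ?thesis using eL by simp
        qed
        have C: "exp (-c) \<le> (1 - r) / (2 * k1)"
        proof -
          have pos: "(1 - r) / (2 * k1) > 0" using r0 k1p by simp
          have "ln (2 * k1 / (1 - r)) \<le> c" unfolding c_def by simp
          then have "exp (-c) \<le> exp (- ln (2 * k1 / (1 - r)))" by simp
          also have "- ln (2 * k1 / (1 - r)) = ln ((1 - r) / (2 * k1))"
            using r0 k1p by (simp add: ln_div)
          also have "exp \<dots> = (1 - r) / (2 * k1)" using pos by simp
          finally show ?thesis .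
        qed
        have BC: "r ^ m \<le> \<epsilon> * ((1 - r) / (2 * k1))"
          using B C eps by (meson order_trans mult_left_mono less_imp_le)
        have "k1 * (r ^ m / (1 - r)) \<le> k1 * (\<epsilon> * ((1 - r) / (2 * k1)) / (1 - r))"
          using BC r0 k1p by (intro mult_left_mono divide_right_mono) auto
        also have "\<dots> = \<epsilon>/2" using r0 k1p by (simp add: field_simps)
        finally have "k1 * (r ^ m / (1 - r)) \<le> \<epsilon>/2" .
        moreover have "infsum p {m..} \<le> k1 * (r ^ m / (1 - r))" using A by (simp only: r_def)
        ultimately show ?thesis by linarith
      qed
      have d4: "x \<in> D" if px: "p x > 0" and h: "m \<le> x \<or> p x < 2 * \<epsilon>" for x
      proof (cases "m \<le> x")
        case True
        have "(L - c)/\<alpha> \<le> N + (L + c)/\<alpha>" using c0 a0 N0 by (simp add: divide_right_mono field_simps)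
        also have "\<dots> \<le> real x" using m_lo True by simp
        finally show ?thesis using Nm[OF True] by (simp add: D_def)
      next
        case False
        then have p2: "p x < 2 * \<epsilon>" using h by simp
        show ?thesis
        proof (cases "N \<le> real x")
          case False
          then have "2 * \<epsilon> \<le> p x" using evC1 px by (auto simp: \<epsilon>_def)
          then show ?thesis using p2 by simp
        next
          case True
          have lo: "k0 * exp (- \<alpha> * real x) < 2 * exp (-L)" using pb[OF True] p2 eL by simp
          have "ln (k0 * exp (- \<alpha> * real x)) < ln (2 * exp (-L))"
            using lo k0 by (subst ln_less_cancel_iff) auto
          then have "ln k0 - \<alpha> * real x < ln 2 - L" using k0 by (simp add: ln_mult)
          moreover have "ln (k0/2) = ln k0 - ln 2" using k0 by (simp add: ln_div)
          moreover have "- c \<le> ln (k0/2)" unfolding c_def by simp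
          ultimately have "L - c \<le> \<alpha> * real x" by linarith
          then have "(L - c)/\<alpha> \<le> real x" using a0 by (simp add: field_simps)
          then show ?thesis using True by (simp add: D_def)
        qed
      qed
      have Dm0: "D \<subseteq> {m0..}" by (auto simp: D_def m0_def)
      have DN: "\<And>x. x \<in> D \<Longrightarrow> real x \<ge> N" by (auto simp: D_def)
      define P0 where "P0 = k1 * (exp (-\<alpha>) ^ m0 / (1 - exp (-\<alpha>)))"
      define R0 where "R0 = k1 * (\<alpha> * (exp (-\<alpha>) ^ m0 * (real m0 / (1 - exp (-\<alpha>))
            + (\<Sum>j. real j * exp (-\<alpha>) ^ j))) + \<bar>ln k0\<bar> * (exp (-\<alpha>) ^ m0 / (1 - exp (-\<alpha>))))"
      have d5a: "infsum p D \<le> P0" unfolding P0_def by (rule tail_lemma(1)[OF p0 p1 a0 k0 k01 pb Dm0 DN])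
      have d5b: "infsum (\<lambda>x. \<bar>p x * ln (p x)\<bar>) D \<le> R0" unfolding R0_def by (rule tail_lemma(2)[OF p0 p1 a0 k0 k01 pb Dm0 DN])
      have rm0: "r ^ m0 \<le> exp c * \<epsilon>"
      proof -
        have "(L - c)/\<alpha> \<le> real m0" unfolding m0_def by (rule real_nat_ceiling_ge)
        then have "L - c \<le> \<alpha> * real m0" using a0 by (simp add: field_simps)
        then have "r ^ m0 \<le> exp (-(L - c))" unfolding rpow by simp
        also have "exp (-(L - c)) = exp c * exp (-L)" by (simp add: exp_add[symmetric])
        finally show ?thesis using eL by simp
      qed
      have P0le: "P0 \<le> Kp * \<epsilon>"
      proof -
        have "P0 = k1 * r ^ m0 / (1 - r)" by (simp add: P0_def r_def)
        also have "\<dots> \<le> k1 * (exp c * \<epsilon>) / (1 - r)" using rm0 k1p r0 by (intro divide_right_mono mult_left_mono) auto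
        also have "\<dots> = Kp * \<epsilon>" by (simp add: Kp_def)
        finally show ?thesis .
      qed
      have R0le: "R0 \<le> \<epsilon> * (Kr1 + Kr2 * ln (real n))"
      proof -
        have R0eq: "R0 = k1 * r ^ m0 * (\<alpha> * real m0 / (1 - r) + \<alpha> * Cr + \<bar>ln k0\<bar> / (1 - r))"
          by (simp add: R0_def r_def Cr_def algebra_simps)
        have "\<alpha> * real m0 \<le> L + \<alpha>" using m0_up a0 by (simp add: field_simps)
        then have "\<alpha> * real m0 / (1 - r) \<le> (L + \<alpha>) / (1 - r)" using r0 by (intro divide_right_mono) auto
        then have inner: "\<alpha> * real m0 / (1 - r) + \<alpha> * Cr + \<bar>ln k0\<bar> / (1 - r)
            \<le> (L + \<alpha>) / (1 - r) + \<alpha> * Cr + \<bar>ln k0\<bar> / (1 - r)" by simp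
        have innpos: "0 \<le> \<alpha> * real m0 / (1 - r) + \<alpha> * Cr + \<bar>ln k0\<bar> / (1 - r)"
          using a0 r0 Cr0 by simp
        have "R0 \<le> k1 * (exp c * \<epsilon>) * ((L + \<alpha>) / (1 - r) + \<alpha> * Cr + \<bar>ln k0\<bar> / (1 - r))"
          unfolding R0eq using rm0 inner innpos k1p r0 eps by (intro mult_mono mult_left_mono) auto
        also have "\<dots> = \<epsilon> * (Kr1 + Kr2 * ln (real n))"
          by (simp add: Kr1_def Kr2_def L_def divide_inverse algebra_simps)
        finally show ?thesis .
      qed
      have P00: "P0 \<ge> 0" using k1p r0 by (simp add: P0_def r_def[symmetric])
      have d6: "real m * t + P0 \<le> 1/2"
      proof -
        have "real m * t + P0 \<le> (1/4 + Kp) * \<epsilon>" using mt P0le by (simp add: algebra_simps)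
        also have "\<dots> \<le> (1/4 + Kp) * e0" using epse0 Kp0 by (intro mult_left_mono) auto
        also have "\<dots> \<le> (1/4 + Kp) * (1 / (2 * (1/4 + Kp)))" using Kp0 by (intro mult_left_mono) (auto simp: e0_def)
        also have "\<dots> = 1/2" using Kp0 by simp
        finally show ?thesis .
      qed
      have d1: "\<bar>Q n x - p x\<bar> \<le> t" if "x < m" for x
        using ev1 mn that by (auto simp: t_def intro: less_imp_le)
      note DB = det_bound[of p "Q n" \<epsilon> t m D P0 R0, OF p0 p1 psum hsum Q0 QF eps t0' d1 tle mt d3 d4 d5a d5b d6]
      define G where "G = {x. \<epsilon> \<le> Q n x}"
      define S where "S = sum (Q n) G"
      define Ip where "Ip = infsum (\<lambda>x. p x * ln (p x)) {x. p x > 0}"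
      define Iq where "Iq = (\<Sum>x\<in>G. (Q n x / S) * ln (Q n x / S))"
      define E1 where "E1 = real m * t * (ln (2/\<epsilon>) + 1)"
      define \<sigma> where "\<sigma> = real m * t + P0"
      have finG: "finite G" using DB(1) by (simp add: G_def)
      have Spos: "S > 0" using DB(2) by (simp add: S_def G_def)
      have Qp: "Q n x > 0" if "x \<in> G" for x using that eps by (auto simp: G_def)
      have diff: "\<bar>Ip - Iq\<bar> \<le> E1 + 2 * \<sigma> * (Hs + E1) + 2 * \<sigma> + R0"
        using DB(3) unfolding Ip_def Iq_def E1_def \<sigma>_def Hs_def G_def S_def .
      have E10: "E1 \<ge> 0" unfolding E1_def using t0' lnp by simp
      have E1e: "E1 \<le> \<epsilon>" unfolding E1_def by (rule E1le)
      have s0: "\<sigma> \<ge> 0" unfolding \<sigma>_def using t0' P00 by simp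
      have s1: "\<sigma> \<le> (1/4 + Kp) * \<epsilon>" unfolding \<sigma>_def using mt P0le by (simp add: algebra_simps)
      have Kr10: "Kr1 \<ge> 0" unfolding Kr1_def using k1p r0 a0 Cr0 by simp
      have Kr20: "Kr2 \<ge> 0" unfolding Kr2_def using k1p r0 t0 by simp
      have t1: "2 * \<sigma> * (Hs + E1) \<le> 2 * ((1/4 + Kp) * \<epsilon>) * (Hs + 1)"
        using s0 s1 E10 E1e eps1 Hs0 by (intro mult_mono) auto
      have t2: "2 * \<sigma> \<le> 2 * ((1/4 + Kp) * \<epsilon>)" using s1 by simp
      define C1 where "C1 = 1 + 2 * (1/4 + Kp) * (Hs + 2) + Kr1"
      have C10: "C1 \<ge> 0" unfolding C1_def using Kp0 Hs0 Kr10 by simp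
      have "E1 + 2 * \<sigma> * (Hs + E1) + 2 * \<sigma> + R0 \<le>
            \<epsilon> + 2 * ((1/4 + Kp) * \<epsilon>) * (Hs + 1) + 2 * ((1/4 + Kp) * \<epsilon>) + \<epsilon> * (Kr1 + Kr2 * ln (real n))"
        using E1e t1 t2 R0le by linarith
      also have "\<dots> = \<epsilon> * C1 + \<epsilon> * Kr2 * ln (real n)" unfolding C1_def by (simp add: field_simps)
      also have "\<epsilon> * C1 \<le> \<epsilon> * C1 * ln (real n)"
        using mult_left_mono[OF lnn, of "\<epsilon> * C1"] eps C10 by simp
      also have "\<epsilon> * C1 * ln (real n) + \<epsilon> * Kr2 * ln (real n) = K * (\<epsilon> * ln (real n))"
        by (simp add: K_def C1_def algebra_simps)
      finally have bnd: "\<bar>Ip - Iq\<bar> \<le> K * (\<epsilon> * ln (real n))" using diff by linarith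
      have lnb: "ln b > 0" using b1 by simp
      have Ep: "entropy_pmf b p = - Ip / ln b" unfolding Ip_def by (rule ent_p)
      have Eq: "entropy_pmf b (\<lambda>x. if x \<in> G then Q n x / S else 0) = - Iq / ln b"
        unfolding Iq_def by (rule ent_q[OF finG Spos Qp])
      have "\<bar>entropy_pmf b p - entropy_pmf b (\<lambda>x. if x \<in> G then Q n x / S else 0)\<bar> = \<bar>Ip - Iq\<bar> / ln b"
        unfolding Ep Eq using lnb by (simp add: abs_div_pos[symmetric] diff_divide_distrib[symmetric] abs_minus_commute)
      also have "\<dots> \<le> K * (\<epsilon> * ln (real n)) / ln b" using bnd lnb by (intro divide_right_mono) auto
      also have "\<dots> = K / ln b * norm (\<epsilon> * ln (real n))" using eps lnn by simp
      finally show ?case unfolding G_def S_def \<epsilon>_def by simp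
    qed
  qed
qed
theorem theorem6:
  fixes M :: "'a measure" and X :: "nat \<Rightarrow> 'a \<Rightarrow> nat" and \<mu> :: "nat pmf"
    and b \<alpha> k0 k1 N \<tau> :: real
  assumes "prob_space M"
    and "b > 1"
    and "set_pmf \<mu> \<subseteq> {1..}"
    and "\<alpha> > 0" and "0 < k0" and "k0 \<le> k1" and "N > 0"
    and "\<And>x. real x \<ge> N \<Longrightarrow>
           k0 * exp (- \<alpha> * real x) \<le> pmf \<mu> x \<and> pmf \<mu> x \<le> k1 * exp (- \<alpha> * real x)"
    and "0 < \<tau>" and "\<tau> < 1/2"
    and "prob_space.indep_vars M (\<lambda>_. count_space UNIV) X UNIV"
    and "\<And>i. distr M (count_space UNIV) (X i) = measure_pmf \<mu>"
  shows "AE \<omega> in M.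
           (\<lambda>n. \<bar>entropy_pmf b (pmf \<mu>)
                  - entropy_pmf b (cond_emp_mass X n (real n powr (- \<tau>)) \<omega>)\<bar>)
           \<in> O(\<lambda>n. real n powr (- \<tau>) * ln (real n))"
proof -
  define \<beta> where "\<beta> = \<tau>/2 + 1/4"
  have \<beta>: "\<tau> < \<beta>" "\<beta> < 1/2" "0 < \<beta>" using assms(9,10) by (auto simp: \<beta>_def)
  have AE: "AE \<omega> in M. eventually (\<lambda>n. \<forall>x\<le>n. \<bar>emp_mass X n \<omega> x - pmf \<mu> x\<bar> < real n powr (-\<beta>)) sequentially"
    by (rule concentration[OF assms(1) assms(11) assms(12) \<beta>(3) \<beta>(2)])
  then show ?thesis
  proof (rule eventually_mono)
    fix \<omega> assume ev: "eventually (\<lambda>n. \<forall>x\<le>n. \<bar>emp_mass X n \<omega> x - pmf \<mu> x\<bar> < real n powr (-\<beta>)) sequentially"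
    have eq: "cond_emp_mass X n (real n powr (-\<tau>)) \<omega> =
       (\<lambda>x. if x \<in> {x. real n powr (-\<tau>) \<le> emp_mass X n \<omega> x}
            then emp_mass X n \<omega> x / sum (emp_mass X n \<omega>) {x. real n powr (-\<tau>) \<le> emp_mass X n \<omega> x} else 0)" for n
      by (rule ext) (simp add: cond_emp_mass_def Gamma_set_def)
    have Q0: "0 \<le> emp_mass X n \<omega> x" for n x by (simp add: emp_mass_def)
    show "(\<lambda>n. \<bar>entropy_pmf b (pmf \<mu>) - entropy_pmf b (cond_emp_mass X n (real n powr (- \<tau>)) \<omega>)\<bar>)
           \<in> O(\<lambda>n. real n powr (- \<tau>) * ln (real n))"
      unfolding eq
      by (rule main_det[where p = "pmf \<mu>" and Q = "\<lambda>n. emp_mass X n \<omega>", OF pmf_nonneg pmf_le_1 pmf_has_sum1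
            assms(4,5,6,7,8,9) \<beta>(1) \<beta>(2) Q0 emp_sum_le1 ev assms(2)])
  qed
qed
end
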